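(* Let $n\in\mathbb N$ and let $u$ be real-valued with $u\in C^\infty(\mathbb R)$, $\partial_x^ku\in L^\infty(\mathbb R)$ for $k=0,1,2$, $4u-u_{xx}>0$ on $\mathbb R$, satisfying $\mathrm{s\text{-}CH}_n(u)=0$, with associated polynomial $R_{2n+2}(z)=\prod_{m=0}^{2n+1}(z-E_m)$, $E_0<E_1<\cdots<E_{2n}<E_{2n+1}=0$. Then for all $x\in\mathbb R$, $$4u(x)-u_{xx}(x)=-\Big(\prod_{m=0}^{2n}E_m\Big)\Big(\prod_{j=1}^n\mu_j(x)^{-2}\Big)>0\quad\text{and}\quad 4u(x)+2u_x(x)>0.$$
   Context: Stationary CH formalism. Let $\mathcal G=(-d^2/dx^2+4)^{-1}$, i.e. $(\mathcal Gv)(x)=\frac14\int_{\mathbb R}e^{-2|x-y|}v(y)\,dy$ on $L^\infty(\mathbb R)$. Put $f_0=1$ and for $\ell\ge1$ define $f_\ell$ by $f_{\ell,x}=-2\mathcal G\big(2(4u-u_{xx})f_{\ell-1,x}+(4u_x-u_{xxx})f_{\ell-1}\big)$, $f_\ell$ being fixed up to an additive integration constant $c_\ell$. Set $g_\ell=f_\ell+\frac12f_{\ell,x}$, $h_\ell=(4u-u_{xx})f_\ell-g_{\ell+1,x}$ for $0\le\ell\le n-1$, $h_n=(4u-u_{xx})f_n$, and $F_n(z,x)=\sum_{\ell=0}^nf_{n-\ell}(x)z^\ell$, $G_n$, $H_n$ analogously with $g_\ell$, $h_\ell$. The $n$th stationary CH equation is $\mathrm{s\text{-}CH}_n(u):=(u_{xxx}-4u_x)f_n-2(4u-u_{xx})f_{n,x}=0$;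 when it holds, $R_{2n+2}(z):=z^2G_n(z,x)^2+zF_n(z,x)H_n(z,x)$ is independent of $x$, monic of degree $2n+2$, with $R_{2n+2}(0)=0$. The zeros of the monic polynomial $F_n(\cdot,x)$ are $\mu_1(x),\dots,\mu_n(x)$. *)

theory Defs
  imports "HOL-Analysis.Analysis"
begin

text \<open>Green's function operator G = (-d^2/dx^2 + 4)^(-1):
  (G v)(x) = 1/4 * integral over R of exp(-2|x-y|) v(y) dy (Lebesgue integral).\<close>
definition CH_G :: "(real \<Rightarrow> real) \<Rightarrow> real \<Rightarrow> real" where
  "CH_G v x = (1/4) * (LINT y|lborel. exp (-2 * \<bar>x - y\<bar>) * v y)"

abbreviation dk :: "nat \<Rightarrow> (real \<Rightarrow> real) \<Rightarrow> real \<Rightarrow> real" where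
  "dk k u \<equiv> (deriv ^^ k) u"

text \<open>The source term in the recursion f_{l,x} = -2 G(2(4u-u_xx) f_{l-1,x} + (4u_x-u_xxx) f_{l-1}).\<close>
definition CH_rhs :: "(real \<Rightarrow> real) \<Rightarrow> (real \<Rightarrow> real) \<Rightarrow> real \<Rightarrow> real" where
  "CH_rhs u fprev x = -2 * CH_G (\<lambda>y. 2 * (4 * u y - dk 2 u y) * deriv fprev y
                                   + (4 * dk 1 u y - dk 3 u y) * fprev y) x"

definition CH_g :: "(nat \<Rightarrow> real \<Rightarrow> real) \<Rightarrow> nat \<Rightarrow> real \<Rightarrow> real" where
  "CH_g f l x = f l x + 1/2 * deriv (f l) x"

definition CH_h :: "(real \<Rightarrow> real) \<Rightarrow> (nat \<Rightarrow> real \<Rightarrow> real) \<Rightarrow> nat \<Rightarrow> nat \<Rightarrow> real \<Rightarrow> real" where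
  "CH_h u f n l x = (if l < n then (4 * u x - dk 2 u x) * f l x - deriv (CH_g f (Suc l)) x
                     else (4 * u x - dk 2 u x) * f n x)"

definition CH_F :: "(nat \<Rightarrow> real \<Rightarrow> real) \<Rightarrow> nat \<Rightarrow> complex \<Rightarrow> real \<Rightarrow> complex" where
  "CH_F f n z x = (\<Sum>l\<le>n. complex_of_real (f (n - l) x) * z ^ l)"

definition CH_Gp :: "(nat \<Rightarrow> real \<Rightarrow> real) \<Rightarrow> nat \<Rightarrow> complex \<Rightarrow> real \<Rightarrow> complex" where
  "CH_Gp f n z x = (\<Sum>l\<le>n. complex_of_real (CH_g f (n - l) x) * z ^ l)"

definition CH_H :: "(real \<Rightarrow> real) \<Rightarrow> (nat \<Rightarrow> real \<Rightarrow> real) \<Rightarrow> nat \<Rightarrow> complex \<Rightarrow> real \<Rightarrow> complex" where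
  "CH_H u f n z x = (\<Sum>l\<le>n. complex_of_real (CH_h u f n (n - l) x) * z ^ l)"

definition sCH :: "(real \<Rightarrow> real) \<Rightarrow> (nat \<Rightarrow> real \<Rightarrow> real) \<Rightarrow> nat \<Rightarrow> real \<Rightarrow> real" where
  "sCH u f n x = (dk 3 u x - 4 * dk 1 u x) * f n x - 2 * (4 * u x - dk 2 u x) * deriv (f n) x"

end

theory Submission
  imports Defs
begin

lemma Eneg_aux:
  fixes E :: "nat \<Rightarrow> real"
  assumes "\<And>m. m < N \<Longrightarrow> E m < E (Suc m)"
  shows "m + k + 1 \<le> N \<Longrightarrow> E m < E (m + k + 1)"
proof (induction k)
  case 0 then show ?case using assms by simp
next
  case (Suc k)
  then have "E m < E (m + k + 1)" by simp
  also have "\<dots> < E (Suc (m + k + 1))" using assms Suc.prems by simp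
  finally show ?case by simp
qed

lemma solve_aux: "(a::complex) * P = - e \<Longrightarrow> P \<noteq> 0 \<Longrightarrow> a = - e * inverse P"
  by (metis mult.assoc right_inverse mult_1_right)

lemma w_pos:
  fixes u :: "real \<Rightarrow> real"
  assumes smooth: "\<And>k x. dk k u differentiable (at x)"
    and bdd: "\<And>k. k \<le> 2 \<Longrightarrow> bounded (range (dk k u))"
    and pos: "\<And>x. 4 * u x - dk 2 u x > 0"
  shows "4 * u x0 + 2 * dk 1 u x0 > 0"
proof (rule ccontr)
  assume neg: "\<not> 4 * u x0 + 2 * dk 1 u x0 > 0"
  define w where "w x = 2 * u x + deriv u x" for x
  have d0: "(u has_real_derivative deriv u x) (at x)" for x
    using smooth[of 0 x] by (simp add: DERIV_deriv_iff_real_differentiable)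
  have d1: "(deriv u has_real_derivative deriv (deriv u) x) (at x)" for x
    using smooth[of 1 x] by (simp add: DERIV_deriv_iff_real_differentiable)
  define g where "g x = w x * exp (-2 * x)" for x
  have dg: "(g has_real_derivative (deriv (deriv u) x - 4 * u x) * exp (-2 * x)) (at x)" for x
  proof -
    have "(g has_real_derivative (2 * deriv u x + deriv (deriv u) x) * exp (-2 * x)
           + w x * (exp (-2 * x) * (-2))) (at x)"
      unfolding g_def w_def
      by (auto intro!: derivative_eq_intros d0 d1)
    then show ?thesis by (simp add: w_def algebra_simps)
  qed
  have dec: "g b < g a" if "a < b" for a b
  proof -
    have "g a > g b"
    proof (rule DERIV_neg_imp_decreasing[OF that])
      fix x show "\<exists>y. DERIV g x :> y \<and> y < 0"
        using dg[of x] pos[of x] by (intro exI[of _ "(deriv (deriv u) x - 4 * u x) * exp (-2 * x)"])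
          (simp add: mult_neg_pos numeral_2_eq_2)
    qed
    then show ?thesis by simp
  qed
  obtain B0 where B0: "\<And>x. \<bar>u x\<bar> \<le> B0"
    using bdd[of 0] by (auto simp: bounded_iff)
  obtain B1 where B1: "\<And>x. \<bar>deriv u x\<bar> \<le> B1"
    using bdd[of 1] by (auto simp: bounded_iff)
  define B where "B = 2 * B0 + B1"
  have wB: "\<bar>w x\<bar> \<le> B" for x
    using B0[of x] B1[of x] unfolding w_def B_def by linarith
  have B0': "B \<ge> 0" using wB[of 0] by linarith
  have "w x0 \<le> 0" using neg by (simp add: w_def)
  hence "g x0 \<le> 0" by (simp add: g_def mult_nonpos_nonneg)
  define c where "c = - g (x0 + 1)"
  have c: "c > 0" using dec[of x0 "x0+1"] \<open>g x0 \<le> 0\<close> by (simp add: c_def)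
  define x where "x = max (x0 + 1) (B / c)"
  have "g x \<le> - c"
  proof (cases "x = x0 + 1")
    case True then show ?thesis by (simp add: c_def)
  next
    case False
    then have "x0 + 1 < x" unfolding x_def by auto
    then show ?thesis using dec[of "x0+1" x] by (simp add: c_def)
  qed
  hence "w x * exp (-2 * x) \<le> - c" by (simp add: g_def)
  hence "w x \<le> - c * exp (2 * x)"
    by (simp add: exp_minus field_simps)
  moreover have "1 + 2 * x \<le> exp (2 * x)" using exp_ge_add_one_self[of "2*x"] by simp
  moreover have "x \<ge> B / c" unfolding x_def by auto
  moreover have "x \<ge> 0" using \<open>x \<ge> B / c\<close> B0' c by (smt (verit) divide_nonneg_pos)
  moreover have "c * x \<ge> B" using \<open>x \<ge> B / c\<close> c by (simp add: field_simps)
  moreover have "c * (1 + 2 * x) \<le> c * exp (2 * x)"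
    using c \<open>1 + 2 * x \<le> exp (2 * x)\<close> by (intro mult_left_mono) auto
  ultimately have "w x \<le> - c * (1 + 2 * x)" by linarith
  hence "w x < - B" using \<open>c * x \<ge> B\<close> c B0' by (simp add: algebra_simps)
  with wB[of x] show False by linarith
qed

theorem mainTheorem4:
  fixes n :: nat and u :: "real \<Rightarrow> real" and f :: "nat \<Rightarrow> real \<Rightarrow> real"
    and E :: "nat \<Rightarrow> real" and \<mu> :: "nat \<Rightarrow> real \<Rightarrow> complex"
  assumes smooth: "\<And>k x. dk k u differentiable (at x)"
    and bdd: "\<And>k. k \<le> 2 \<Longrightarrow> bounded (range (dk k u))"
    and pos: "\<And>x. 4 * u x - dk 2 u x > 0"
    and f0: "f 0 = (\<lambda>x. 1)"
    and frec: "\<And>l x. 1 \<le> l \<Longrightarrow> l \<le> n \<Longrightarrow> (f l has_real_derivative CH_rhs u (f (l - 1)) x) (at x)"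
    and stat: "\<And>x. sCH u f n x = 0"
    and R: "\<And>z x. z\<^sup>2 * (CH_Gp f n z x)\<^sup>2 + z * CH_F f n z x * CH_H u f n z x
                  = (\<Prod>m\<le>2*n+1. z - complex_of_real (E m))"
    and Eord: "\<And>m. m < 2*n+1 \<Longrightarrow> E m < E (Suc m)"
    and Elast: "E (2*n+1) = 0"
    and mu: "\<And>z x. CH_F f n z x = (\<Prod>j\<in>{1..n}. z - \<mu> j x)"
  shows "\<forall>x. complex_of_real (4 * u x - dk 2 u x)
              = - complex_of_real (\<Prod>m\<le>2*n. E m) * (\<Prod>j\<in>{1..n}. inverse ((\<mu> j x)\<^sup>2))
           \<and> 4 * u x - dk 2 u x > 0
           \<and> 4 * u x + 2 * dk 1 u x > 0"
proof (intro allI conjI)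
  fix x
  show "4 * u x - dk 2 u x > 0" by (rule pos)
  show "4 * u x + 2 * dk 1 u x > 0" by (rule w_pos[OF smooth bdd pos])
  have Eneg: "E m < 0" if "m \<le> 2*n" for m
    using Eneg_aux[of "2*n+1" E m "2*n - m", OF Eord] that Elast by simp
  have Elast': "E (Suc (n*2)) = 0" using Elast by (simp add: mult.commute)
  define A where "A z = z * (CH_Gp f n z x)\<^sup>2 + CH_F f n z x * CH_H u f n z x" for z
  define Q where "Q z = (\<Prod>m\<le>2*n. z - complex_of_real (E m))" for z
  have AQ: "A z = Q z" if "z \<noteq> 0" for z
  proof -
    have "z * A z = z * Q z"
      using R[of z x] unfolding A_def Q_def
      using Elast' by (simp add: power2_eq_square algebra_simps)
    with that show ?thesis by simp
  qed
  have cA: "isCont A 0" unfolding A_def CH_Gp_def CH_F_def CH_H_def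
    by (intro continuous_intros)
  have cQ: "isCont Q 0" unfolding Q_def
    by (intro continuous_intros)
  have "(A \<longlongrightarrow> A 0) (at 0)" using cA by (simp add: isCont_def)
  moreover have "(A \<longlongrightarrow> Q 0) (at 0)"
  proof -
    have "(Q \<longlongrightarrow> Q 0) (at 0)" using cQ by (simp add: isCont_def)
    moreover have "eventually (\<lambda>z. Q z = A z) (at (0::complex))"
      using AQ by (auto simp: eventually_at_filter)
    ultimately show ?thesis by (rule Lim_transform_eventually)
  qed
  ultimately have A0: "A 0 = Q 0" by (rule LIM_unique)
  have F0: "CH_F f n 0 x = complex_of_real (f n x)"
    unfolding CH_F_def by (simp add: power_0_left if_distrib sum.If_cases)
  have H0: "CH_H u f n 0 x = complex_of_real ((4 * u x - dk 2 u x) * f n x)"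
    unfolding CH_H_def by (simp add: power_0_left if_distrib sum.If_cases CH_h_def)
  have Q0: "Q 0 = - complex_of_real (\<Prod>m\<le>2*n. E m)"
    unfolding Q_def by (simp add: prod_uminus)
  have fmu: "complex_of_real (f n x) = (\<Prod>j\<in>{1..n}. - \<mu> j x)"
    using mu[of 0 x] F0 by simp
  have key: "complex_of_real (4 * u x - dk 2 u x) * (\<Prod>j\<in>{1..n}. (\<mu> j x)\<^sup>2)
      = - complex_of_real (\<Prod>m\<le>2*n. E m)"
  proof -
    have "(\<Prod>j\<in>{1..n}. (\<mu> j x)\<^sup>2) = (complex_of_real (f n x))\<^sup>2"
      unfolding fmu by (simp add: power2_eq_square prod.distrib[symmetric])
    then show ?thesis using A0 F0 H0 Q0 unfolding A_def
      by (simp add: power2_eq_square algebra_simps)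
  qed
  have Enz: "(\<Prod>m\<le>2*n. E m) \<noteq> 0" using Eneg by (auto simp: prod_zero_iff) (metis less_irrefl)
  have munz: "(\<Prod>j\<in>{1..n}. (\<mu> j x)\<^sup>2) \<noteq> 0"
  proof
    assume "(\<Prod>j\<in>{1..n}. (\<mu> j x)\<^sup>2) = 0"
    then have "- complex_of_real (\<Prod>m\<le>2*n. E m) = 0" using key by (metis mult_zero_right)
    then have "complex_of_real (\<Prod>m\<le>2*n. E m) = 0" by (metis neg_equal_0_iff_equal)
    then show False using Enz by (simp only: of_real_eq_0_iff)
  qed
  have "(\<Prod>j\<in>{1..n}. inverse ((\<mu> j x)\<^sup>2)) = inverse (\<Prod>j\<in>{1..n}. (\<mu> j x)\<^sup>2)"
    using prod_inversef[of "\<lambda>j. (\<mu> j x)\<^sup>2" "{1..n}"] by (simp add: comp_def)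
  then show "complex_of_real (4 * u x - dk 2 u x)
      = - complex_of_real (\<Prod>m\<le>2*n. E m) * (\<Prod>j\<in>{1..n}. inverse ((\<mu> j x)\<^sup>2))"
    using solve_aux[OF key munz] by simp
qed

end
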